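(* In the setting below, for all limit ordinals $\alpha<\beta$ and all natural numbers $n\geq0$, $M_{\alpha+n}\subseteq M_{\beta+n}$.
   Context: Work in ZFA (ZF with a set $A$ of atoms, i.e. urelements that have no elements), extended by a primitive binary relation $\preccurlyeq$ on $A$, with Separation and Replacement holding for formulas mentioning $\preccurlyeq$. $A$ is an infinite set of atoms and $\preccurlyeq$ is a pre-ordering (reflexive, transitive) on $A$ with no minimal elements: for every $a\in A$ there is $b\in A$ with $b\preccurlyeq a$ and not $a\preccurlyeq b$. For $a\in A$, $pr(a)=\{b\in A:b\preccurlyeq a\}$; $LO(A,\preccurlyeq)$ is the set of nonempty $x\subseteq A$ with $pr(a)\subseteq x$ for all $a\in x$. For a set $X$ of sets, $LO(X,\subseteq)$ is the set of nonempty $x\subseteq X$ such that for every $y\in x$ and every $z\in X$ with $z\subseteq y$, $z\in x$. The magmatic hierarchy: $M_1=LO(A,\preccurlyeq)$; $M_{\alpha+1}=LO(M_\alpha,\subseteq)$ for $\alpha\geq1$; $M_\alpha=\bigcup_{1\leq\beta<\alpha}M_\beta$ for limit $\alpha$; $M=\bigcup_{\alpha\geq1}M_\alpha$. Limit ordinals are nonzero. *)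

theory Defs
  imports Main
begin

text \<open>A universe of ZFA over a type 'u: membership is given by elts :: 'u => 'u set,
  A is the set of atoms (urelements). All other objects are sets. Separation and
  Replacement are stated second-order (for arbitrary HOL predicates / functions),
  so in particular they hold for formulas mentioning the pre-order le.\<close>

definition mem_rel :: "('u \<Rightarrow> 'u set) \<Rightarrow> ('u \<times> 'u) set" where
  "mem_rel elts = {(x, y). x \<in> elts y}"

definition zfa :: "('u \<Rightarrow> 'u set) \<Rightarrow> 'u set \<Rightarrow> bool" where
  "zfa elts A \<longleftrightarrow>
     (\<forall>a\<in>A. elts a = {})
   \<and> (\<exists>x. x \<notin> A \<and> elts x = A)
   \<and> (\<forall>x y. x \<notin> A \<longrightarrow> y \<notin> A \<longrightarrow> elts x = elts y \<longrightarrow> x = y)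
   \<and> wf (mem_rel elts)
   \<and> (\<forall>a b. \<exists>y. y \<notin> A \<and> elts y = {a, b})
   \<and> (\<forall>x X. X \<subseteq> elts x \<longrightarrow> (\<exists>y. y \<notin> A \<and> elts y = X))
   \<and> (\<forall>x (f :: 'u \<Rightarrow> 'u). \<exists>y. y \<notin> A \<and> elts y = f ` elts x)
   \<and> (\<forall>x. \<exists>y. y \<notin> A \<and> elts y = \<Union> (elts ` elts x))
   \<and> (\<forall>x. \<exists>y. y \<notin> A \<and> elts y = {z. z \<notin> A \<and> elts z \<subseteq> elts x})
   \<and> (\<exists>x. x \<notin> A \<and> (\<exists>e\<in>elts x. e \<notin> A \<and> elts e = {})
          \<and> (\<forall>y\<in>elts x. \<exists>s\<in>elts x. s \<notin> A \<and> elts s = insert y (elts y)))"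

definition preord_atoms :: "'u set \<Rightarrow> ('u \<Rightarrow> 'u \<Rightarrow> bool) \<Rightarrow> bool" where
  "preord_atoms A le \<longleftrightarrow> (\<forall>a\<in>A. le a a)
     \<and> (\<forall>a\<in>A. \<forall>b\<in>A. \<forall>c\<in>A. le a b \<longrightarrow> le b c \<longrightarrow> le a c)"

definition no_minimal :: "'u set \<Rightarrow> ('u \<Rightarrow> 'u \<Rightarrow> bool) \<Rightarrow> bool" where
  "no_minimal A le \<longleftrightarrow> (\<forall>a\<in>A. \<exists>b\<in>A. le b a \<and> \<not> le a b)"

definition pr :: "'u set \<Rightarrow> ('u \<Rightarrow> 'u \<Rightarrow> bool) \<Rightarrow> 'u \<Rightarrow> 'u set" where
  "pr A le a = {b \<in> A. le b a}"

definition LO_atoms :: "('u \<Rightarrow> 'u set) \<Rightarrow> 'u set \<Rightarrow> ('u \<Rightarrow> 'u \<Rightarrow> bool) \<Rightarrow> 'u set" where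
  "LO_atoms elts A le = {x. x \<notin> A \<and> elts x \<noteq> {} \<and> elts x \<subseteq> A
                          \<and> (\<forall>a\<in>elts x. pr A le a \<subseteq> elts x)}"

definition LO_sub :: "('u \<Rightarrow> 'u set) \<Rightarrow> 'u set \<Rightarrow> 'u set \<Rightarrow> 'u set" where
  "LO_sub elts A X = {x. x \<notin> A \<and> elts x \<noteq> {} \<and> elts x \<subseteq> X
                        \<and> (\<forall>y\<in>elts x. \<forall>z\<in>X. elts z \<subseteq> elts y \<longrightarrow> z \<in> elts x)}"

definition ord :: "('u \<Rightarrow> 'u set) \<Rightarrow> 'u set \<Rightarrow> 'u \<Rightarrow> bool" where
  "ord elts A x \<longleftrightarrow> x \<notin> A
     \<and> (\<forall>y\<in>elts x. y \<notin> A \<and> elts y \<subseteq> elts x)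
     \<and> (\<forall>y\<in>elts x. \<forall>z\<in>elts x. y \<in> elts z \<or> y = z \<or> z \<in> elts y)"

definition osucc :: "('u \<Rightarrow> 'u set) \<Rightarrow> 'u set \<Rightarrow> 'u \<Rightarrow> 'u" where
  "osucc elts A x = (THE y. y \<notin> A \<and> elts y = insert x (elts x))"

definition limit_ord :: "('u \<Rightarrow> 'u set) \<Rightarrow> 'u set \<Rightarrow> 'u \<Rightarrow> bool" where
  "limit_ord elts A x \<longleftrightarrow> ord elts A x \<and> elts x \<noteq> {}
     \<and> \<not> (\<exists>g\<in>elts x. elts x = insert g (elts g))"

text \<open>The magmatic hierarchy M_alpha (alpha an ordinal of the universe, alpha >= 1),
  as the collection of its elements; defined by recursion on membership.
  The value at 0 is irrelevant (set to empty).\<close>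
definition Mlev :: "('u \<Rightarrow> 'u set) \<Rightarrow> 'u set \<Rightarrow> ('u \<Rightarrow> 'u \<Rightarrow> bool) \<Rightarrow> 'u \<Rightarrow> 'u set" where
  "Mlev elts A le = wfrec (mem_rel elts) (\<lambda>M a.
     if elts a = {} then {}
     else if (\<exists>g\<in>elts a. elts a = insert g (elts g)) then
       (let g = (SOME g. g \<in> elts a \<and> elts a = insert g (elts g)) in
         if elts g = {} then LO_atoms elts A le else LO_sub elts A (M g))
     else \<Union> {M g | g. g \<in> elts a \<and> elts g \<noteq> {}})"

end

theory Submission
  imports Defs
begin

definition succlike :: "('u \<Rightarrow> 'u set) \<Rightarrow> 'u \<Rightarrow> bool" where
  "succlike elts a \<longleftrightarrow> (\<exists>g\<in>elts a. elts a = insert g (elts g))"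

lemma Mlev_eq:
  assumes wf: "wf (mem_rel elts)"
  shows "Mlev elts A le a =
     (if elts a = {} then {}
     else if (\<exists>g\<in>elts a. elts a = insert g (elts g)) then
       (let g = (SOME g. g \<in> elts a \<and> elts a = insert g (elts g)) in
         if elts g = {} then LO_atoms elts A le else LO_sub elts A (Mlev elts A le g))
     else \<Union> {Mlev elts A le g | g. g \<in> elts a \<and> elts g \<noteq> {}})"
proof -
  let ?H = "(\<lambda>M a.
     if elts a = {} then {}
     else if (\<exists>g\<in>elts a. elts a = insert g (elts g)) then
       (let g = (SOME g. g \<in> elts a \<and> elts a = insert g (elts g)) in
         if elts g = {} then LO_atoms elts A le else LO_sub elts A (M g))
     else \<Union> {M g | g. g \<in> elts a \<and> elts g \<noteq> {}})"
  have e: "Mlev elts A le a = ?H (cut (Mlev elts A le) (mem_rel elts) a) a"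
    unfolding Mlev_def by (rule wfrec[OF wf])
  have c: "\<And>g. g \<in> elts a \<Longrightarrow> cut (Mlev elts A le) (mem_rel elts) a g = Mlev elts A le g"
    by (rule cut_apply) (simp add: mem_rel_def)
  show ?thesis
  proof (cases "elts a = {}")
    case True then show ?thesis using e by simp
  next
    case ne: False
    show ?thesis
    proof (cases "\<exists>g\<in>elts a. elts a = insert g (elts g)")
      case True
      let ?g = "SOME g. g \<in> elts a \<and> elts a = insert g (elts g)"
      have "?g \<in> elts a" using someI_ex[of "\<lambda>g. g \<in> elts a \<and> elts a = insert g (elts g)"] True by blast
      then show ?thesis using e c[of ?g] ne True by (simp add: Let_def)
    next
      case False
      have "{cut (Mlev elts A le) (mem_rel elts) a g | g. g \<in> elts a \<and> elts g \<noteq> {}}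
          = {Mlev elts A le g | g. g \<in> elts a \<and> elts g \<noteq> {}}" using c by metis
      then show ?thesis using e ne False by simp
    qed
  qed
qed

lemma Mlev_notA:
  assumes wf: "wf (mem_rel elts)"
  shows "y \<in> Mlev elts A le a \<Longrightarrow> y \<notin> A"
  using wf
proof (induction a rule: wf_induct_rule)
  case (less a)
  show ?case using less.prems less.IH Mlev_eq[OF wf, of A le a]
    apply (simp add: Let_def LO_atoms_def LO_sub_def split: if_splits)
    by (auto simp: mem_rel_def)
qed

lemma Mlev_D:
  assumes wf: "wf (mem_rel elts)"
  shows "y \<in> Mlev elts A le a \<Longrightarrow> \<exists>b. succlike elts b \<and> y \<in> Mlev elts A le b \<and> Mlev elts A le b \<subseteq> Mlev elts A le a"
  using wf
proof (induction a rule: wf_induct_rule)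
  case (less a)
  show ?case
  proof (cases "elts a = {} \<or> succlike elts a")
    case True
    then show ?thesis
    proof
      assume "elts a = {}" then show ?thesis using less.prems Mlev_eq[OF wf, of A le a] by simp
    next
      assume "succlike elts a" then show ?thesis using less.prems by blast
    qed
  next
    case False
    then have eq: "Mlev elts A le a = \<Union> {Mlev elts A le g | g. g \<in> elts a \<and> elts g \<noteq> {}}"
      using Mlev_eq[OF wf, of A le a] by (simp add: succlike_def)
    then obtain g where g: "g \<in> elts a" "y \<in> Mlev elts A le g" "elts g \<noteq> {}" using less.prems by auto
    have sub: "Mlev elts A le g \<subseteq> Mlev elts A le a" using eq g by auto
    from less.IH[of g] g obtain b where "succlike elts b \<and> y \<in> Mlev elts A le b \<and> Mlev elts A le b \<subseteq> Mlev elts A le g"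
      by (auto simp: mem_rel_def)
    then show ?thesis using sub by blast
  qed
qed

lemma Mlev_succ:
  assumes wf: "wf (mem_rel elts)" and "succlike elts b"
  shows "Mlev elts A le b = LO_atoms elts A le \<or> (\<exists>g. Mlev elts A le b = LO_sub elts A (Mlev elts A le g))"
proof -
  have ne: "elts b \<noteq> {}" using assms(2) by (auto simp: succlike_def)
  have "\<exists>g\<in>elts b. elts b = insert g (elts g)" using assms(2) by (simp add: succlike_def)
  then have "Mlev elts A le b = (let g = (SOME g. g \<in> elts b \<and> elts b = insert g (elts g)) in
         if elts g = {} then LO_atoms elts A le else LO_sub elts A (Mlev elts A le g))"
    using Mlev_eq[OF wf, of A le b] ne by (simp only: if_False if_True simp_thms)
  then show ?thesis unfolding Let_def by (cases "elts (SOME g. g \<in> elts b \<and> elts b = insert g (elts g)) = {}") auto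
qed

lemma Mlev_L:
  assumes wf: "wf (mem_rel elts)"
  shows "y \<in> Mlev elts A le c \<Longrightarrow> z \<in> Mlev elts A le d \<Longrightarrow> elts z \<subseteq> elts y \<Longrightarrow> z \<in> Mlev elts A le c"
  using wf
proof (induction y arbitrary: c d z rule: wf_induct_rule)
  case (less y)
  obtain c1 where c1: "succlike elts c1" "y \<in> Mlev elts A le c1" "Mlev elts A le c1 \<subseteq> Mlev elts A le c"
    using Mlev_D[OF wf less.prems(1)] by blast
  obtain d1 where d1: "succlike elts d1" "z \<in> Mlev elts A le d1"
    using Mlev_D[OF wf less.prems(2)] by blast
  have zne: "elts z \<noteq> {}" and znA: "z \<notin> A"
    using d1(2) Mlev_succ[OF wf d1(1), of A le] unfolding LO_atoms_def LO_sub_def by blast+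
  have "z \<in> Mlev elts A le c1"
  proof -
    consider "Mlev elts A le c1 = LO_atoms elts A le" | g where "Mlev elts A le c1 = LO_sub elts A (Mlev elts A le g)"
      using Mlev_succ[OF wf c1(1), of A le] by blast
    then show ?thesis
    proof cases
      case 1
      consider "Mlev elts A le d1 = LO_atoms elts A le" | g' where "Mlev elts A le d1 = LO_sub elts A (Mlev elts A le g')"
        using Mlev_succ[OF wf d1(1), of A le] by blast
      then show ?thesis
      proof cases
        case 1 then show ?thesis using \<open>Mlev elts A le c1 = LO_atoms elts A le\<close> d1 by simp
      next
        case 2
        have "elts z \<subseteq> A" using less.prems(3) c1(2) 1 unfolding LO_atoms_def by blast
        moreover have "elts z \<inter> A = {}" using d1(2) 2 Mlev_notA[OF wf, of _ A le g'] unfolding LO_sub_def by blast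
        ultimately show ?thesis using zne by blast
      qed
    next
      case 2
      consider "Mlev elts A le d1 = LO_atoms elts A le" | g' where "Mlev elts A le d1 = LO_sub elts A (Mlev elts A le g')"
        using Mlev_succ[OF wf d1(1), of A le] by blast
      then show ?thesis
      proof cases
        case 1
        have "elts z \<subseteq> A" using d1(2) 1 unfolding LO_atoms_def by blast
        moreover have "elts z \<inter> A = {}" using less.prems(3) c1(2) 2 Mlev_notA[OF wf, of _ A le g] unfolding LO_sub_def by blast
        ultimately show ?thesis using zne by blast
      next
        case 3: 2
        have ysub: "elts y \<subseteq> Mlev elts A le g" using c1(2) 2 by (simp add: LO_sub_def)
        have zprop: "elts z \<subseteq> Mlev elts A le g'" "\<forall>w\<in>elts z. \<forall>u\<in>Mlev elts A le g'. elts u \<subseteq> elts w \<longrightarrow> u \<in> elts z"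
          using d1(2) 3 by (simp_all add: LO_sub_def)
        have "\<forall>w\<in>elts z. \<forall>u\<in>Mlev elts A le g. elts u \<subseteq> elts w \<longrightarrow> u \<in> elts z"
        proof (intro ballI impI)
          fix w u assume w: "w \<in> elts z" and u: "u \<in> Mlev elts A le g" and uw: "elts u \<subseteq> elts w"
          have wy: "(w, y) \<in> mem_rel elts" using w less.prems(3) by (auto simp: mem_rel_def)
          have "w \<in> Mlev elts A le g'" using w zprop(1) by blast
          then have "u \<in> Mlev elts A le g'" using less.IH[OF wy _ u uw] by blast
          then show "u \<in> elts z" using zprop(2) w uw by blast
        qed
        then show ?thesis using 2 znA zne less.prems(3) ysub unfolding LO_sub_def by blast
      qed
    qed
  qed
  then show ?case using c1(3) by blast
qed


lemma zfa_wf: "zfa elts A \<Longrightarrow> wf (mem_rel elts)"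
  unfolding zfa_def by (drule conjunct2, drule conjunct2, drule conjunct2, drule conjunct1) assumption

lemma zfa_ext: "zfa elts A \<Longrightarrow> \<forall>x y. x \<notin> A \<longrightarrow> y \<notin> A \<longrightarrow> elts x = elts y \<longrightarrow> x = y"
  unfolding zfa_def by (drule conjunct2, drule conjunct2, drule conjunct1) assumption

lemma zfa_pair: "zfa elts A \<Longrightarrow> \<forall>a b. \<exists>y. y \<notin> A \<and> elts y = {a, b}"
  unfolding zfa_def by (drule conjunct2, drule conjunct2, drule conjunct2, drule conjunct2, drule conjunct1) assumption

lemma zfa_union: "zfa elts A \<Longrightarrow> \<forall>x. \<exists>y. y \<notin> A \<and> elts y = \<Union> (elts ` elts x)"
  unfolding zfa_def by (drule conjunct2, drule conjunct2, drule conjunct2, drule conjunct2, drule conjunct2,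
     drule conjunct2, drule conjunct2, drule conjunct1) assumption

lemma osucc_prop:
  assumes z: "zfa elts A"
  shows "osucc elts A x \<notin> A \<and> elts (osucc elts A x) = insert x (elts x)"
proof -
  from zfa_pair[OF z] obtain p where p: "p \<notin> A \<and> elts p = {x, x}" by blast
  from zfa_pair[OF z] obtain q where q: "q \<notin> A \<and> elts q = {x, p}" by blast
  from zfa_union[OF z] obtain y where y: "y \<notin> A \<and> elts y = \<Union> (elts ` elts q)" by blast
  have "elts y = elts x \<union> elts p" using y q by simp
  then have y2: "elts y = insert x (elts x)" using p by simp
  have ext: "\<forall>x y. x \<notin> A \<longrightarrow> y \<notin> A \<longrightarrow> elts x = elts y \<longrightarrow> x = y" by (rule zfa_ext[OF z])
  have "(THE y. y \<notin> A \<and> elts y = insert x (elts x)) = y"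
  proof (rule the_equality)
    show "y \<notin> A \<and> elts y = insert x (elts x)" using y y2 by blast
  next
    fix w assume "w \<notin> A \<and> elts w = insert x (elts x)"
    then show "w = y" using ext y y2 by simp
  qed
  then show ?thesis unfolding osucc_def using y y2 by simp
qed

lemma Mlev_osucc:
  assumes z: "zfa elts A" and ne: "elts g \<noteq> {}"
  shows "Mlev elts A le (osucc elts A g) = LO_sub elts A (Mlev elts A le g)"
proof -
  have wf: "wf (mem_rel elts)" using z by (rule zfa_wf)
  let ?a = "osucc elts A g"
  have ea: "elts ?a = insert g (elts g)" using osucc_prop[OF z] by blast
  have ex: "\<exists>g\<in>elts ?a. elts ?a = insert g (elts g)" using ea by blast
  let ?g = "SOME g. g \<in> elts ?a \<and> elts ?a = insert g (elts g)"
  obtain h where h: "h = ?g" by blast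
  have sg: "h \<in> elts ?a \<and> elts ?a = insert h (elts h)"
    unfolding h by (rule someI_ex[of "\<lambda>g. g \<in> elts ?a \<and> elts ?a = insert g (elts g)"]) (use ex in blast)
  have "h = g"
  proof (rule ccontr)
    assume nq: "h \<noteq> g"
    have "h \<in> insert g (elts g)" using sg ea by simp
    then have 1: "h \<in> elts g" using nq by simp
    have "g \<in> insert h (elts h)" using sg ea by (metis insertI1)
    then have 2: "g \<in> elts h" using nq by simp
    have "(h, g) \<in> mem_rel elts" "(g, h) \<in> mem_rel elts" using 1 2 by (simp_all add: mem_rel_def)
    then show False using wf_asym[OF wf] by blast
  qed
  then have hg: "?g = g" using h by simp
  have "Mlev elts A le ?a = (let g = ?g in
         if elts g = {} then LO_atoms elts A le else LO_sub elts A (Mlev elts A le g))"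
    using Mlev_eq[OF wf, of A le ?a] ex ea by (simp only: if_False if_True simp_thms insert_not_empty)
  then show ?thesis using hg ne by (simp only: Let_def if_False)
qed

lemma iter_ne:
  assumes z: "zfa elts A" and "elts \<alpha> \<noteq> {}"
  shows "elts ((osucc elts A ^^ n) \<alpha>) \<noteq> {}"
  using assms osucc_prop[OF z] by (cases n) auto

theorem lemma4p7:
  fixes elts :: "'u \<Rightarrow> 'u set" and A :: "'u set" and le :: "'u \<Rightarrow> 'u \<Rightarrow> bool"
    and \<alpha> \<beta> :: 'u and n :: nat
  assumes "zfa elts A" and "infinite A"
    and "preord_atoms A le" and "no_minimal A le"
    and "limit_ord elts A \<alpha>" and "limit_ord elts A \<beta>" and "\<alpha> \<in> elts \<beta>"
  shows "Mlev elts A le ((osucc elts A ^^ n) \<alpha>) \<subseteq> Mlev elts A le ((osucc elts A ^^ n) \<beta>)"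
proof (induction n)
  case 0
  have wf: "wf (mem_rel elts)" using assms(1) by (rule zfa_wf)
  have la: "Mlev elts A le \<alpha> = \<Union> {Mlev elts A le g | g. g \<in> elts \<alpha> \<and> elts g \<noteq> {}}"
    using Mlev_eq[OF wf, of A le \<alpha>] assms(5) unfolding limit_ord_def by (simp only: if_False simp_thms)
  have lb: "Mlev elts A le \<beta> = \<Union> {Mlev elts A le g | g. g \<in> elts \<beta> \<and> elts g \<noteq> {}}"
    using Mlev_eq[OF wf, of A le \<beta>] assms(6) unfolding limit_ord_def by (simp only: if_False simp_thms)
  have "elts \<alpha> \<subseteq> elts \<beta>" using assms(6,7) unfolding limit_ord_def ord_def by blast
  then show ?case unfolding funpow_0 la lb by blast
next
  case (Suc n)
  have wf: "wf (mem_rel elts)" using assms(1) by (rule zfa_wf)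
  let ?a = "(osucc elts A ^^ n) \<alpha>" and ?b = "(osucc elts A ^^ n) \<beta>"
  have nea: "elts ?a \<noteq> {}" using iter_ne[OF assms(1)] assms(5) unfolding limit_ord_def by blast
  have neb: "elts ?b \<noteq> {}" using iter_ne[OF assms(1)] assms(6) unfolding limit_ord_def by blast
  have ea: "Mlev elts A le ((osucc elts A ^^ Suc n) \<alpha>) = LO_sub elts A (Mlev elts A le ?a)"
    using Mlev_osucc[OF assms(1) nea] by simp
  have eb: "Mlev elts A le ((osucc elts A ^^ Suc n) \<beta>) = LO_sub elts A (Mlev elts A le ?b)"
    using Mlev_osucc[OF assms(1) neb] by simp
  have "LO_sub elts A (Mlev elts A le ?a) \<subseteq> LO_sub elts A (Mlev elts A le ?b)"
  proof
    fix x assume x: "x \<in> LO_sub elts A (Mlev elts A le ?a)"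
    have "\<forall>y\<in>elts x. \<forall>z\<in>Mlev elts A le ?b. elts z \<subseteq> elts y \<longrightarrow> z \<in> elts x"
    proof (intro ballI impI)
      fix y z assume y: "y \<in> elts x" and z: "z \<in> Mlev elts A le ?b" and zy: "elts z \<subseteq> elts y"
      have "y \<in> Mlev elts A le ?a" using x y unfolding LO_sub_def by blast
      then have "z \<in> Mlev elts A le ?a" using Mlev_L[OF wf _ z zy] by blast
      then show "z \<in> elts x" using x y zy unfolding LO_sub_def by blast
    qed
    then show "x \<in> LO_sub elts A (Mlev elts A le ?b)" using x Suc.IH unfolding LO_sub_def by blast
  qed
  then show ?case using ea eb by simp
qed

end
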